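(* Let $m\ge 1$ and $\theta\in(0,1]$. In the expected normalized profile $\hat P$, candidate $1$ is a Super Condorcet Winner; moreover there is a neighborhood of $\hat P$ (among continuous profiles of total weight $1$, topology of weight vectors in $\mathbb R^{m!}$) in every profile of which candidate $1$ is a Super Condorcet Winner. In particular IRV elects $1$ and is not CM in every profile of this neighborhood.
   Context: A ranking is a strict total order on $\{1,\dots,m\}$. A continuous profile consists of the candidate set, total weight $w(P)>0$ and weights $w(p,P)\ge0$ summing to $w(P)$. For $K\subseteq\{1,\dots,m\}$, $P_K$ restricts each ranking to $K$. Plurality score $s_{\mathrm{Plu}}(c,P)$: total weight of rankings placing $c$ first. Super Condorcet Winner: $c$ is an SCW in $P$ if $s_{\mathrm{Plu}}(c,P_K)>\frac{w(P)}{|K|}$ for every $K\ni c$. IRV: repeatedly eliminate a candidate with minimal Plurality score among remaining candidates (ties broken by a fixed rule), the last remaining candidate wins. CM (continuous): a rule $f$ is CM in $P$ if there is a continuous $Q$ with the same candidates and total weight, $f(Q)\ne f(P)$, and every ranking $p$ with $w(p,Q)<w(p,P)$ prefers $f(Q)$ to $f(P)$. Expected normalized profile $\hat P$: total weight $1$, weight $\theta+\frac{1-\theta}{m!}$ on $1\succ\cdots\succ m$ and $\frac{1-\theta}{m!}$ on each other ranking. *)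

theory Defs
  imports Complex_Main
begin

text \<open>Candidates are 1..m; a ranking is a list enumerating {1..m} without repetition,
  the head being the most preferred candidate.\<close>
definition rankings :: "nat \<Rightarrow> nat list set" where
  "rankings m = {p. distinct p \<and> set p = {1..m}}"

text \<open>A continuous profile: nonnegative weights on the rankings
  (values outside rankings are irrelevant and never used).\<close>
definition is_profile :: "nat \<Rightarrow> (nat list \<Rightarrow> real) \<Rightarrow> bool" where
  "is_profile m w \<longleftrightarrow> (\<forall>p\<in>rankings m. 0 \<le> w p)"

definition total :: "nat \<Rightarrow> (nat list \<Rightarrow> real) \<Rightarrow> real" where
  "total m w = (\<Sum>p\<in>rankings m. w p)"

definition top_in :: "nat set \<Rightarrow> nat list \<Rightarrow> nat" where
  "top_in K p = hd (filter (\<lambda>x. x \<in> K) p)"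

definition plu :: "nat \<Rightarrow> (nat list \<Rightarrow> real) \<Rightarrow> nat set \<Rightarrow> nat \<Rightarrow> real" where
  "plu m w K c = (\<Sum>p\<in>{p\<in>rankings m. top_in K p = c}. w p)"

text \<open>Super Condorcet Winner (subsets K with at least two candidates; for |K| = 1
  the condition would be unsatisfiable).\<close>
definition SCW :: "nat \<Rightarrow> (nat list \<Rightarrow> real) \<Rightarrow> nat \<Rightarrow> bool" where
  "SCW m w c \<longleftrightarrow> c \<in> {1..m} \<and>
     (\<forall>K. K \<subseteq> {1..m} \<and> c \<in> K \<and> 2 \<le> card K \<longrightarrow> plu m w K c > total m w / real (card K))"

definition tie_rule :: "(nat set \<Rightarrow> nat set \<Rightarrow> nat) \<Rightarrow> bool" where
  "tie_rule sel \<longleftrightarrow> (\<forall>R T. finite T \<and> T \<noteq> {} \<longrightarrow> sel R T \<in> T)"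

definition irv_step :: "nat \<Rightarrow> (nat set \<Rightarrow> nat set \<Rightarrow> nat) \<Rightarrow> (nat list \<Rightarrow> real) \<Rightarrow> nat set \<Rightarrow> nat set" where
  "irv_step m sel w R = R - {sel R {c\<in>R. \<forall>d\<in>R. plu m w R c \<le> plu m w R d}}"

definition IRV :: "nat \<Rightarrow> (nat set \<Rightarrow> nat set \<Rightarrow> nat) \<Rightarrow> (nat list \<Rightarrow> real) \<Rightarrow> nat" where
  "IRV m sel w = the_elem ((irv_step m sel w ^^ (m - 1)) {1..m})"

definition prefers :: "nat list \<Rightarrow> nat \<Rightarrow> nat \<Rightarrow> bool" where
  "prefers p a b \<longleftrightarrow> (\<exists>i j. i < j \<and> j < length p \<and> p ! i = a \<and> p ! j = b)"

definition CM :: "nat \<Rightarrow> ((nat list \<Rightarrow> real) \<Rightarrow> nat) \<Rightarrow> (nat list \<Rightarrow> real) \<Rightarrow> bool" where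
  "CM m f w \<longleftrightarrow> (\<exists>Q. is_profile m Q \<and> total m Q = total m w \<and> f Q \<noteq> f w \<and>
      (\<forall>p\<in>rankings m. Q p < w p \<longrightarrow> prefers p (f Q) (f w)))"

definition Phat :: "nat \<Rightarrow> real \<Rightarrow> nat list \<Rightarrow> real" where
  "Phat m \<theta> p = (if p = [1..<m+1] then \<theta> + (1 - \<theta>) / fact m else (1 - \<theta>) / fact m)"

end

theory Submission imports Defs "HOL-Combinatorics.Multiset_Permutations" begin

lemma finite_rankings: "finite (rankings m)"
proof -
  have "rankings m = permutations_of_set {1..m}"
    unfolding rankings_def permutations_of_set_def by auto
  thus ?thesis by simp
qed

lemma card_rankings: "card (rankings m) = fact m"
proof -
  have "rankings m = permutations_of_set {1..m}"
    unfolding rankings_def permutations_of_set_def by auto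
  thus ?thesis by simp
qed

lemma top_in_mem:
  assumes "p \<in> rankings m" "K \<subseteq> {1..m}" "K \<noteq> {}"
  shows "top_in K p \<in> K"
proof -
  have "filter (\<lambda>x. x \<in> K) p \<noteq> []" using assms unfolding rankings_def
    by (auto simp: filter_empty_conv)
  then have "hd (filter (\<lambda>x. x \<in> K) p) \<in> set (filter (\<lambda>x. x \<in> K) p)" by (rule hd_in_set)
  thus ?thesis unfolding top_in_def by simp
qed

lemma sum_plu:
  assumes "K \<subseteq> {1..m}" "K \<noteq> {}"
  shows "(\<Sum>c\<in>K. plu m w K c) = total m w"
proof -
  have fK: "finite K" using assms(1) finite_subset by blast
  have "(\<Sum>c\<in>K. plu m w K c) = (\<Sum>c\<in>K. \<Sum>p\<in>{p. p \<in> rankings m \<and> top_in K p = c}. w p)"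
    unfolding plu_def by simp
  also have "\<dots> = (\<Sum>p\<in>rankings m. w p)"
    by (rule sum.group[OF finite_rankings fK]) (use top_in_mem assms in blast)
  finally show ?thesis unfolding total_def .
qed

lemma filter_first:
  assumes "distinct p" "hd (filter P p) = a" "P b" "i < j" "j < length p" "p ! i = b" "p ! j = a"
  shows False
  using assms
proof (induction p arbitrary: i j)
  case Nil thus ?case by simp
next
  case (Cons x xs)
  obtain j' where j': "j = Suc j'" using Cons.prems(4) by (cases j) auto
  show ?case
  proof (cases i)
    case 0
    then have "x = b" using Cons.prems by simp
    then have "a = x" using Cons.prems by simp
    moreover have "xs ! j' \<in> set xs" using Cons.prems j' by (metis nth_mem length_Cons Suc_less_SucD)
    ultimately show False using Cons.prems j' by (metis distinct.simps(2) nth_Cons_Suc)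
  next
    case (Suc i')
    show False
    proof (cases "P x")
      case True
      then have "a = x" using Cons.prems by simp
      moreover have "xs ! j' \<in> set xs" using Cons.prems j' by (metis nth_mem length_Cons Suc_less_SucD)
      ultimately show False using Cons.prems j' by (metis distinct.simps(2) nth_Cons_Suc)
    next
      case False
      show False
        by (rule Cons.IH[of i' j']) (use Cons.prems Suc j' False in auto)
    qed
  qed
qed

definition tset :: "nat \<Rightarrow> (nat list \<Rightarrow> real) \<Rightarrow> nat set \<Rightarrow> nat set" where
  "tset m w R = {c\<in>R. \<forall>d\<in>R. plu m w R c \<le> plu m w R d}"

lemma tset_ne:
  assumes "finite R" "R \<noteq> {}"
  shows "tset m w R \<noteq> {}"
proof -
  obtain c where c: "c \<in> R" "plu m w R c = Min (plu m w R ` R)"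
  proof -
    have "Min (plu m w R ` R) \<in> plu m w R ` R" using Min_in[of "plu m w R ` R"] assms by simp
    then show ?thesis using that by (metis imageE)
  qed
  have "\<forall>d\<in>R. plu m w R c \<le> plu m w R d" using c assms by simp
  thus ?thesis using c unfolding tset_def by auto
qed

lemma step_props:
  assumes "tie_rule sel" "R \<subseteq> {1..m}" "2 \<le> card R"
  shows "sel R (tset m w R) \<in> tset m w R" "irv_step m sel w R = R - {sel R (tset m w R)}"
    "card (irv_step m sel w R) = card R - 1"
proof -
  have fR: "finite R" using assms(2) finite_subset by blast
  have "R \<noteq> {}" using assms(3) by auto
  then have ne: "tset m w R \<noteq> {}" using tset_ne fR by blast
  have "finite (tset m w R)" using fR unfolding tset_def by simp
  then show s: "sel R (tset m w R) \<in> tset m w R" using ne assms(1) unfolding tie_rule_def by blast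
  show e: "irv_step m sel w R = R - {sel R (tset m w R)}" unfolding irv_step_def tset_def by simp
  have "sel R (tset m w R) \<in> R" using s unfolding tset_def by blast
  then show "card (irv_step m sel w R) = card R - 1" using e fR by simp
qed

lemma iter_props:
  assumes "tie_rule sel" "j \<le> m - 1"
  shows "(irv_step m sel w ^^ j) {1..m} \<subseteq> {1..m} \<and> card ((irv_step m sel w ^^ j) {1..m}) = m - j"
  using assms(2)
proof (induction j)
  case 0 thus ?case by simp
next
  case (Suc j)
  let ?R = "(irv_step m sel w ^^ j) {1..m}"
  have IH: "?R \<subseteq> {1..m}" "card ?R = m - j" using Suc by auto
  have c2: "2 \<le> card ?R" using IH Suc.prems by simp
  have "irv_step m sel w ?R \<subseteq> ?R" unfolding irv_step_def by blast
  then show ?case using step_props(3)[OF assms(1) IH(1) c2] IH by auto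
qed

lemma iter_mono:
  assumes "j \<le> k"
  shows "(irv_step m sel w ^^ k) R \<subseteq> (irv_step m sel w ^^ j) R"
  using assms
proof (induction k)
  case 0 thus ?case by simp
next
  case (Suc k)
  have "(irv_step m sel w ^^ Suc k) R \<subseteq> (irv_step m sel w ^^ k) R"
    unfolding irv_step_def by auto
  then show ?case using Suc by (cases "j = Suc k") auto
qed

lemma SCW_not_min:
  assumes "SCW m w 1" "R \<subseteq> {1..m}" "1 \<in> R" "2 \<le> card R"
  shows "1 \<notin> tset m w R"
proof
  assume "1 \<in> tset m w R"
  then have le: "\<forall>d\<in>R. plu m w R 1 \<le> plu m w R d" unfolding tset_def by blast
  have "(\<Sum>c\<in>R. plu m w R 1) \<le> (\<Sum>c\<in>R. plu m w R c)" by (rule sum_mono) (use le in blast)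
  also have "\<dots> = total m w" using sum_plu assms by blast
  finally have "real (card R) * plu m w R 1 \<le> total m w" by simp
  moreover have "plu m w R 1 > total m w / real (card R)" using assms unfolding SCW_def by blast
  ultimately show False using assms(4) by (simp add: field_simps)
qed

lemma IRV_SCW:
  assumes "tie_rule sel" "SCW m w 1" "1 \<le> m"
  shows "IRV m sel w = 1"
proof -
  have "j \<le> m - 1 \<Longrightarrow> 1 \<in> (irv_step m sel w ^^ j) {1..m}" for j
  proof (induction j)
    case 0 thus ?case using assms by simp
  next
    case (Suc j)
    let ?R = "(irv_step m sel w ^^ j) {1..m}"
    have IH: "?R \<subseteq> {1..m}" "card ?R = m - j" using Suc iter_props[OF assms(1)] by auto
    have c2: "2 \<le> card ?R" using IH Suc.prems by simp
    have "1 \<in> ?R" using Suc by simp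
    moreover have "1 \<notin> tset m w ?R" using SCW_not_min[OF assms(2) IH(1) \<open>1 \<in> ?R\<close> c2] .
    moreover have "sel ?R (tset m w ?R) \<in> tset m w ?R" using step_props(1)[OF assms(1) IH(1) c2] .
    ultimately show ?case using step_props(2)[OF assms(1) IH(1) c2] by auto
  qed
  then have in1: "1 \<in> (irv_step m sel w ^^ (m - 1)) {1..m}" by simp
  have "card ((irv_step m sel w ^^ (m - 1)) {1..m}) = 1" using iter_props[OF assms(1), of "m - 1"] assms(3) by simp
  then have "(irv_step m sel w ^^ (m - 1)) {1..m} = {1}" using in1 by (metis card_1_singletonE singletonD)
  then show ?thesis unfolding IRV_def by simp
qed

lemma notCM:
  assumes sel: "tie_rule sel" and scw: "SCW m w 1" and m1: "1 \<le> m"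
  shows "\<not> CM m (IRV m sel) w"
proof
  assume "CM m (IRV m sel) w"
  then obtain Q where Q: "is_profile m Q" "total m Q = total m w" "IRV m sel Q \<noteq> IRV m sel w"
    "\<forall>p\<in>rankings m. Q p < w p \<longrightarrow> prefers p (IRV m sel Q) (IRV m sel w)"
    unfolding CM_def by blast
  have w1: "IRV m sel w = 1" using IRV_SCW sel scw m1 by blast
  define d where "d = IRV m sel Q"
  have d1: "d \<noteq> 1" using Q w1 d_def by simp
  define RR where "RR j = (irv_step m sel Q ^^ j) {1..m}" for j
  have "card (RR (m - 1)) = 1" using iter_props[OF sel, of "m - 1" m Q] m1 RR_def by simp
  then obtain e where e: "RR (m - 1) = {e}" by (metis card_1_singletonE)
  then have Rf: "RR (m - 1) = {d}" unfolding d_def IRV_def RR_def by simp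
  have "\<exists>j<m-1. 1 \<in> RR j \<and> 1 \<notin> RR (Suc j)"
  proof (rule ccontr)
    assume H: "\<not> ?thesis"
    have "j \<le> m - 1 \<Longrightarrow> 1 \<in> RR j" for j
    proof (induction j)
      case 0 thus ?case using m1 RR_def by simp
    next
      case (Suc j) thus ?case using H by auto
    qed
    then have "1 \<in> RR (m - 1)" by simp
    then show False using Rf d1 by simp
  qed
  then obtain j where j: "j < m - 1" "1 \<in> RR j" "1 \<notin> RR (Suc j)" by blast
  let ?R = "RR j"
  have IH: "?R \<subseteq> {1..m}" "card ?R = m - j" using iter_props[OF sel, of j m Q] j RR_def by auto
  have c2: "2 \<le> card ?R" using IH j by simp
  have st: "RR (Suc j) = ?R - {sel ?R (tset m Q ?R)}" using step_props(2)[OF sel IH(1) c2] RR_def by simp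
  have "sel ?R (tset m Q ?R) = 1" using st j by auto
  then have "1 \<in> tset m Q ?R" using step_props(1)[OF sel IH(1) c2, of Q] by simp
  then have le: "\<forall>d\<in>?R. plu m Q ?R 1 \<le> plu m Q ?R d" unfolding tset_def by blast
  have "(\<Sum>c\<in>?R. plu m Q ?R 1) \<le> (\<Sum>c\<in>?R. plu m Q ?R c)" by (rule sum_mono) (use le in blast)
  also have "\<dots> = total m Q" using sum_plu IH c2 by (metis card.empty not_numeral_le_zero)
  finally have "real (card ?R) * plu m Q ?R 1 \<le> total m w" using Q by simp
  moreover have "plu m w ?R 1 > total m w / real (card ?R)" using scw IH j c2 unfolding SCW_def by blast
  moreover have "real (card ?R) > 0" using c2 by simp
  ultimately have "real (card ?R) * plu m Q ?R 1 < real (card ?R) * plu m w ?R 1"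
    by (metis divide_less_eq mult.commute order_le_less_trans)
  then have lt: "plu m Q ?R 1 < plu m w ?R 1" using c2 by (simp add: mult_less_cancel_left_pos)
  have "\<exists>p\<in>{p\<in>rankings m. top_in ?R p = 1}. Q p < w p"
  proof (rule ccontr)
    assume "\<not> ?thesis"
    then have "plu m w ?R 1 \<le> plu m Q ?R 1" unfolding plu_def by (intro sum_mono) force
    then show False using lt by simp
  qed
  then obtain p where p: "p \<in> rankings m" "top_in ?R p = 1" "Q p < w p" by blast
  have "prefers p d 1" using Q(4) p w1 d_def by simp
  then obtain i k where ik: "i < k" "k < length p" "p ! i = d" "p ! k = 1" unfolding prefers_def by blast
  have "d \<in> ?R" using iter_mono[of j "m - 1" m sel Q "{1..m}"] j Rf RR_def by auto
  show False
    by (rule filter_first[of p "\<lambda>x. x \<in> ?R" 1 d i k]) (use p ik \<open>d \<in> ?R\<close> in \<open>auto simp: rankings_def top_in_def\<close>)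
qed

definition swp :: "nat \<Rightarrow> nat \<Rightarrow> nat \<Rightarrow> nat" where
  "swp a c x = (if x = a then c else if x = c then a else x)"

lemma swp_swp[simp]: "swp a c (swp a c x) = x" unfolding swp_def by auto

lemma swp_in: "a \<in> K \<Longrightarrow> c \<in> K \<Longrightarrow> swp a c x \<in> K \<longleftrightarrow> x \<in> K"
  unfolding swp_def by auto

lemma swp_mem: "a \<in> K \<Longrightarrow> c \<in> K \<Longrightarrow> x \<in> K \<Longrightarrow> swp a c x \<in> K"
  unfolding swp_def by auto

lemma swp_range: "a \<in> {1..m} \<Longrightarrow> c \<in> {1..m} \<Longrightarrow> swp a c ` {1..m} = {1..m}"
proof -
  assume A: "a \<in> {1..m}" "c \<in> {1..m}"
  have "swp a c ` {1..m} \<subseteq> {1..m}" using swp_mem[OF A] by blast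
  moreover have "{1..m} \<subseteq> swp a c ` {1..m}"
  proof
    fix x assume "x \<in> {1..m}"
    then have "swp a c x \<in> {1..m}" using swp_mem[OF A] by blast
    then show "x \<in> swp a c ` {1..m}" by (metis swp_swp imageI)
  qed
  ultimately show ?thesis by blast
qed

lemma inj_swp: "inj (swp a c)" by (metis swp_swp injI)

lemma map_swp_S:
  assumes "K \<subseteq> {1..m}" "a \<in> K" "c \<in> K" "p \<in> rankings m" "top_in K p = a"
  shows "map (swp a c) p \<in> rankings m \<and> top_in K (map (swp a c) p) = c"
proof -
  have A: "a \<in> {1..m}" "c \<in> {1..m}" using assms by auto
  have p: "distinct p" "set p = {1..m}" using assms(4) unfolding rankings_def by auto
  have "distinct (map (swp a c) p)" using p(1) inj_swp
    by (simp add: distinct_map) (metis inj_on_subset subset_UNIV)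
  moreover have "set (map (swp a c) p) = {1..m}" using p(2) swp_range[OF A] by simp
  ultimately have r: "map (swp a c) p \<in> rankings m" unfolding rankings_def by blast
  have ne: "filter (\<lambda>x. x \<in> K) p \<noteq> []" using assms unfolding rankings_def
    by (auto simp: filter_empty_conv)
  have "filter (\<lambda>x. x \<in> K) (map (swp a c) p) = map (swp a c) (filter (\<lambda>x. x \<in> K) p)"
    by (simp add: filter_map comp_def swp_in[OF assms(2,3)])
  then have "top_in K (map (swp a c) p) = swp a c (top_in K p)"
    unfolding top_in_def using ne by (simp add: hd_map)
  then show ?thesis using r assms(5) by (simp add: swp_def)
qed

lemma card_S_le:
  assumes "K \<subseteq> {1..m}" "a \<in> K" "c \<in> K"
  shows "card {p\<in>rankings m. top_in K p = a} \<le> card {p\<in>rankings m. top_in K p = c}"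
proof -
  have "card {p\<in>rankings m. top_in K p = a} = card (map (swp a c) ` {p\<in>rankings m. top_in K p = a})"
    by (rule card_image[symmetric]) (metis inj_swp inj_mapI inj_on_subset subset_UNIV)
  also have "\<dots> \<le> card {p\<in>rankings m. top_in K p = c}"
    by (rule card_mono) (use finite_rankings map_swp_S[OF assms] in auto)
  finally show ?thesis .
qed

lemma swp_sym: "swp a c = swp c a" unfolding swp_def by auto

lemma card_S_eq:
  assumes "K \<subseteq> {1..m}" "a \<in> K" "c \<in> K"
  shows "card {p\<in>rankings m. top_in K p = a} = card {p\<in>rankings m. top_in K p = c}"
  using card_S_le[OF assms] card_S_le[OF assms(1,3,2)] by simp

lemma count_S:
  assumes "K \<subseteq> {1..m}" "1 \<in> K"
  shows "real (card K) * real (card {p\<in>rankings m. top_in K p = 1}) = fact m"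
proof -
  have Kne: "K \<noteq> {}" using assms by blast
  have e1: "(\<Sum>c\<in>K. plu m (\<lambda>_. 1) K c) = total m (\<lambda>_. 1)" by (rule sum_plu[OF assms(1) Kne])
  have e2: "plu m (\<lambda>_. 1) K c = real (card {p\<in>rankings m. top_in K p = c})" for c
    unfolding plu_def by simp
  have e3: "total m (\<lambda>_. 1) = fact m" unfolding total_def by (simp add: card_rankings)
  have e4: "plu m (\<lambda>_. 1) K c = real (card {p\<in>rankings m. top_in K p = 1})" if "c \<in> K" for c
    unfolding e2 using card_S_eq[OF assms(1) that assms(2)] by simp
  have "(\<Sum>c\<in>K. plu m (\<lambda>_. 1) K c) = (\<Sum>c\<in>K. real (card {p\<in>rankings m. top_in K p = 1}))"
    by (rule sum.cong[OF refl e4])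
  then show ?thesis using e1 e3 by simp
qed

lemma id_rank: "[1..<m+1] \<in> rankings m" unfolding rankings_def by auto

lemma id_rank': "[Suc 0..<Suc m] \<in> rankings m" unfolding rankings_def by auto

lemma id_top: "1 \<le> m \<Longrightarrow> 1 \<in> K \<Longrightarrow> top_in K [1..<m+1] = 1"
  unfolding top_in_def by (simp add: upt_conv_Cons del: upt_Suc)

lemma total_Phat: "total m (Phat m \<theta>) = 1"
proof -
  have "total m (Phat m \<theta>) = (\<Sum>p\<in>rankings m. (1 - \<theta>) / fact m + (if p = [1..<m+1] then \<theta> else 0))"
    unfolding total_def Phat_def by (intro sum.cong) auto
  also have "\<dots> = real (card (rankings m)) * ((1 - \<theta>) / fact m) + \<theta>"
    by (simp add: sum.distrib sum.delta[OF finite_rankings] id_rank id_rank' del: upt_Suc)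
  also have "\<dots> = 1" by (simp add: card_rankings)
  finally show ?thesis .
qed

lemma plu_Phat:
  assumes "1 \<le> m" "1 \<in> K"
  shows "plu m (Phat m \<theta>) K 1 = real (card {p\<in>rankings m. top_in K p = 1}) * ((1 - \<theta>) / fact m) + \<theta>"
proof -
  define S where "S = {p\<in>rankings m. top_in K p = 1}"
  define idr where "idr = [1..<m+1]"
  have fS: "finite S" unfolding S_def using finite_rankings by simp
  have iS: "idr \<in> S" unfolding S_def idr_def using id_rank id_top[OF assms] by blast
  have "plu m (Phat m \<theta>) K 1 = (\<Sum>p\<in>S. (1 - \<theta>) / fact m + (if p = idr then \<theta> else 0))"
    unfolding plu_def Phat_def S_def idr_def by (intro sum.cong) auto
  also have "\<dots> = (\<Sum>p\<in>S. (1 - \<theta>) / fact m) + (\<Sum>p\<in>S. (if p = idr then \<theta> else 0))"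
    by (rule sum.distrib)
  also have "(\<Sum>p\<in>S. (if p = idr then \<theta> else 0)) = \<theta>"
    using sum.delta[OF fS, of idr "\<lambda>_. \<theta>"] iS by simp
  also have "(\<Sum>p\<in>S. (1 - \<theta>) / fact m) = real (card S) * ((1 - \<theta>) / fact m)" by simp
  finally show ?thesis unfolding S_def .
qed

lemma near_SCW:
  assumes m1: "1 \<le> m" and th: "0 < \<theta>" "\<theta> \<le> 1" and tot: "total m Q = 1"
    and near: "\<forall>p\<in>rankings m. \<bar>Q p - Phat m \<theta> p\<bar> < \<theta> / (2 * fact m)"
  shows "SCW m Q 1"
  unfolding SCW_def
proof (intro conjI allI impI)
  show "1 \<in> {1..m}" using m1 by simp
  fix K assume K: "K \<subseteq> {1..m} \<and> 1 \<in> K \<and> 2 \<le> card K"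
  define S where "S = {p\<in>rankings m. top_in K p = 1}"
  define N where "N = (fact m :: real)"
  define k where "k = real (card K)"
  define n where "n = real (card S)"
  define r where "r = n / N"
  have Npos: "N > 0" unfolding N_def by simp
  have k2: "k \<ge> 2" using K unfolding k_def by simp
  have kn: "k * n = N" using count_S[of K m] K unfolding k_def n_def N_def S_def by simp
  have r: "r = 1 / k" unfolding r_def using kn Npos k2 by (simp add: field_simps)
  have fS: "finite S" unfolding S_def using finite_rankings by simp
  have iS: "[1..<m+1] \<in> S" unfolding S_def using id_rank id_top[OF m1] K by blast
  have "(\<Sum>p\<in>S. Phat m \<theta> p - Q p) < (\<Sum>p\<in>S. \<theta> / (2 * N))"
    by (rule sum_strict_mono[OF fS]) (use iS near S_def N_def in \<open>auto simp: abs_less_iff\<close>)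
  also have "\<dots> = n * (\<theta> / (2 * N))" unfolding n_def by simp
  finally have d: "plu m (Phat m \<theta>) K 1 - plu m Q K 1 < n * (\<theta> / (2 * N))"
    unfolding plu_def S_def by (simp add: sum_subtractf)
  have pP: "plu m (Phat m \<theta>) K 1 = n * ((1 - \<theta>) / N) + \<theta>"
    using plu_Phat[OF m1, of K \<theta>] K unfolding n_def S_def N_def by simp
  have "plu m Q K 1 > r * (1 - \<theta>) + \<theta> - r * \<theta> / 2"
    using d pP unfolding r_def by (simp add: field_simps)
  moreover have "r \<le> 1 / 2" unfolding r using k2 by (intro divide_left_mono) auto
  moreover have "\<theta> * (1 - 3 * r / 2) \<ge> 0" using th \<open>r \<le> 1/2\<close> by (intro mult_nonneg_nonneg) auto
  ultimately have "plu m Q K 1 > r" by (simp add: algebra_simps)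
  then show "total m Q / real (card K) < plu m Q K 1" using tot r unfolding k_def by simp
qed

theorem mainTheorem11:
  fixes m :: nat and \<theta> :: real
  assumes "1 \<le> m" and "0 < \<theta>" and "\<theta> \<le> 1"
  shows "SCW m (Phat m \<theta>) 1 \<and>
    (\<exists>\<epsilon>>0. \<forall>Q. is_profile m Q \<and> total m Q = 1 \<and>
        (\<forall>p\<in>rankings m. \<bar>Q p - Phat m \<theta> p\<bar> < \<epsilon>) \<longrightarrow>
          SCW m Q 1 \<and>
          (\<forall>sel. tie_rule sel \<longrightarrow> IRV m sel Q = 1 \<and> \<not> CM m (IRV m sel) Q))"
proof
  have ep: "\<theta> / (2 * fact m) > 0" using assms by simp
  show "SCW m (Phat m \<theta>) 1"
    by (rule near_SCW[OF assms total_Phat]) (use ep in simp)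
  show "\<exists>\<epsilon>>0. \<forall>Q. is_profile m Q \<and> total m Q = 1 \<and>
        (\<forall>p\<in>rankings m. \<bar>Q p - Phat m \<theta> p\<bar> < \<epsilon>) \<longrightarrow>
          SCW m Q 1 \<and>
          (\<forall>sel. tie_rule sel \<longrightarrow> IRV m sel Q = 1 \<and> \<not> CM m (IRV m sel) Q)"
  proof (intro exI[of _ "\<theta> / (2 * fact m)"] conjI ep allI impI)
    fix Q assume Q: "is_profile m Q \<and> total m Q = 1 \<and>
        (\<forall>p\<in>rankings m. \<bar>Q p - Phat m \<theta> p\<bar> < \<theta> / (2 * fact m))"
    then show scw: "SCW m Q 1" using near_SCW[OF assms] by blast
    fix sel assume sel: "tie_rule sel"
    show "IRV m sel Q = 1" using IRV_SCW[OF sel scw assms(1)] .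
    show "\<not> CM m (IRV m sel) Q" using notCM[OF sel scw assms(1)] .
  qed
qed

end
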